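(* For DEMO on the weighted vertex cover problem, the search point $0^n$ is included in the population in expected time $O\big(n^3(\log n+\log W_{max})^2\big)$, where $W_{max}$ is the maximum vertex weight.
   Context: Weighted vertex cover: $G=(V,E)$, $V=\{v_1,\dots,v_n\}$, $w:V\to\mathbb{N}^+$. Search points $x\in\{0,1\}^n$; $Cost(x)=\sum_i w(v_i)x_i$; $G(x)=(V(x),E(x))$ with $V(x)=V\setminus\{v_i:x_i=1\}$, $E(x)$ = edges with no selected endpoint; $LP(x)$ = optimal value of: minimize $\sum_{v_i\in V(x)}w(v_i)y_i$ s.t. $y_i+y_j\ge1$ for $\{v_i,v_j\}\in E(x)$, $0\le y_i\le1$. $f(x)=(Cost(x),LP(x))$, $f(x)\le f(y)$ componentwise. DEMO: $\delta=\frac1{2n}$, $b_1(x)=\lceil\log_{1+\delta}(1+Cost(x))\rceil$, $b_2(x)=\lceil\log_{1+\delta}(1+LP(x))\rceil$, $b=(b_1,b_2)$. Start with uniformly random $x$, $P=\{x\}$. Each iteration: choose $x\in P$ uniformly; create $x'$ by flipping each bit independently with probability $1/n$; if some $y\in P$ satisfies ($f(y)\le f(x')$ and $f(y)\ne f(x')$) or ($b(y)=b(x')$ and $Cost(y)+2LP(y)\le Cost(x')+2LP(x')$), discard $x'$; otherwise add $x'$ and delete all other $z\in P$ with $f(x')\le f(z)$ or $b(z)=b(x')$. Time = number of iterations. *)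

theory Defs
  imports "HOL-Probability.Probability"
begin

text \<open>Graph on vertex set {0..<n}: E is a set of 2-element subsets of {0..<n};
  weights w i > 0 for i < n. Search points are functions nat => bool that are False
  outside {0..<n} (bit i <-> x_i = 1).\<close>

definition wvc_instance :: "nat \<Rightarrow> nat set set \<Rightarrow> (nat \<Rightarrow> nat) \<Rightarrow> bool" where
  "wvc_instance n E w \<longleftrightarrow> (\<forall>e\<in>E. e \<subseteq> {0..<n} \<and> card e = 2) \<and> (\<forall>i<n. 0 < w i)"

definition Wmax :: "nat \<Rightarrow> (nat \<Rightarrow> nat) \<Rightarrow> nat" where
  "Wmax n w = Max (w ` {0..<n})"

definition Cost :: "nat \<Rightarrow> (nat \<Rightarrow> nat) \<Rightarrow> (nat \<Rightarrow> bool) \<Rightarrow> real" where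
  "Cost n w x = (\<Sum>i<n. if x i then real (w i) else 0)"

definition Vx :: "nat \<Rightarrow> (nat \<Rightarrow> bool) \<Rightarrow> nat set" where
  "Vx n x = {i. i < n \<and> \<not> x i}"

definition Ex :: "nat set set \<Rightarrow> (nat \<Rightarrow> bool) \<Rightarrow> nat set set" where
  "Ex E x = {e \<in> E. \<forall>i\<in>e. \<not> x i}"

text \<open>Optimal value of the LP relaxation of the residual instance G(x).\<close>
definition LP :: "nat \<Rightarrow> nat set set \<Rightarrow> (nat \<Rightarrow> nat) \<Rightarrow> (nat \<Rightarrow> bool) \<Rightarrow> real" where
  "LP n E w x = Inf {(\<Sum>i\<in>Vx n x. real (w i) * y i) | y :: nat \<Rightarrow> real.
      (\<forall>i\<in>Vx n x. 0 \<le> y i \<and> y i \<le> 1) \<and>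
      (\<forall>e\<in>Ex E x. \<forall>i j. e = {i, j} \<longrightarrow> y i + y j \<ge> 1)}"

definition fit :: "nat \<Rightarrow> nat set set \<Rightarrow> (nat \<Rightarrow> nat) \<Rightarrow> (nat \<Rightarrow> bool) \<Rightarrow> real \<times> real" where
  "fit n E w x = (Cost n w x, LP n E w x)"

definition weakly_le :: "real \<times> real \<Rightarrow> real \<times> real \<Rightarrow> bool" where
  "weakly_le a b \<longleftrightarrow> fst a \<le> fst b \<and> snd a \<le> snd b"

definition delta :: "nat \<Rightarrow> real" where
  "delta n = 1 / (2 * real n)"

definition box :: "nat \<Rightarrow> nat set set \<Rightarrow> (nat \<Rightarrow> nat) \<Rightarrow> (nat \<Rightarrow> bool) \<Rightarrow> int \<times> int" where
  "box n E w x = (\<lceil>log (1 + delta n) (1 + Cost n w x)\<rceil>, \<lceil>log (1 + delta n) (1 + LP n E w x)\<rceil>)"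

definition demo_update :: "nat \<Rightarrow> nat set set \<Rightarrow> (nat \<Rightarrow> nat) \<Rightarrow> (nat \<Rightarrow> bool) set \<Rightarrow> (nat \<Rightarrow> bool) \<Rightarrow> (nat \<Rightarrow> bool) set" where
  "demo_update n E w P x' =
    (if \<exists>y\<in>P. (weakly_le (fit n E w y) (fit n E w x') \<and> fit n E w y \<noteq> fit n E w x') \<or>
              (box n E w y = box n E w x' \<and>
               Cost n w y + 2 * LP n E w y \<le> Cost n w x' + 2 * LP n E w x')
     then P
     else insert x' {z \<in> P. \<not> (weakly_le (fit n E w x') (fit n E w z) \<or> box n E w z = box n E w x')})"

definition mutate :: "nat \<Rightarrow> (nat \<Rightarrow> bool) \<Rightarrow> (nat \<Rightarrow> bool) pmf" where
  "mutate n x = map_pmf (\<lambda>flip i. x i \<noteq> flip i) (Pi_pmf {0..<n} False (\<lambda>_. bernoulli_pmf (1 / real n)))"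

definition demo_step :: "nat \<Rightarrow> nat set set \<Rightarrow> (nat \<Rightarrow> nat) \<Rightarrow> (nat \<Rightarrow> bool) set \<Rightarrow> (nat \<Rightarrow> bool) set pmf" where
  "demo_step n E w P = bind_pmf (pmf_of_set P) (\<lambda>x. map_pmf (demo_update n E w P) (mutate n x))"

definition zero_pt :: "nat \<Rightarrow> bool" where
  "zero_pt = (\<lambda>_. False)"

definition demo_step_stopped :: "nat \<Rightarrow> nat set set \<Rightarrow> (nat \<Rightarrow> nat) \<Rightarrow> (nat \<Rightarrow> bool) set \<Rightarrow> (nat \<Rightarrow> bool) set pmf" where
  "demo_step_stopped n E w P = (if zero_pt \<in> P then return_pmf P else demo_step n E w P)"

definition init_pt :: "nat \<Rightarrow> (nat \<Rightarrow> bool) pmf" where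
  "init_pt n = Pi_pmf {0..<n} False (\<lambda>_. bernoulli_pmf (1/2))"

primrec demo_pop :: "nat \<Rightarrow> nat set set \<Rightarrow> (nat \<Rightarrow> nat) \<Rightarrow> nat \<Rightarrow> (nat \<Rightarrow> bool) set pmf" where
  "demo_pop n E w 0 = map_pmf (\<lambda>x. {x}) (init_pt n)"
| "demo_pop n E w (Suc t) = bind_pmf (demo_pop n E w t) (demo_step_stopped n E w)"

text \<open>Expected number of iterations T until 0^n is in the population:
  E[T] = sum over t of Pr[T > t].\<close>
definition demo_expected_time :: "nat \<Rightarrow> nat set set \<Rightarrow> (nat \<Rightarrow> nat) \<Rightarrow> ennreal" where
  "demo_expected_time n E w =
     (\<Sum>t. ennreal (measure_pmf.prob (demo_pop n E w t) {P. zero_pt \<notin> P}))"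

end

theory Submission
  imports Defs
begin

definition b1 :: "nat \<Rightarrow> (nat \<Rightarrow> nat) \<Rightarrow> (nat \<Rightarrow> bool) \<Rightarrow> int" where
  "b1 n w x = \<lceil>log (1 + delta n) (1 + Cost n w x)\<rceil>"

lemma fst_box: "fst (box n E w x) = b1 n w x"
  by (simp add: box_def b1_def)

lemma base_gt1: "n > 0 \<Longrightarrow> 1 < 1 + delta n"
  by (simp add: delta_def)

lemma Cost_nonneg: "0 \<le> Cost n w x"
  unfolding Cost_def by (intro sum_nonneg) auto

lemma Cost_le: assumes "n > 0" shows "Cost n w x \<le> real n * real (Wmax n w)"
proof -
  have "Cost n w x \<le> (\<Sum>i<n. real (Wmax n w))"
    unfolding Cost_def
  proof (intro sum_mono)
    fix i assume "i \<in> {..<n}"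
    hence "w i \<le> Wmax n w" unfolding Wmax_def by (intro Max_ge) auto
    thus "(if x i then real (w i) else 0) \<le> real (Wmax n w)" by auto
  qed
  thus ?thesis by simp
qed

lemma LP_set_ne: "(\<Sum>i\<in>Vx n x. real (w i) * 1) \<in> {(\<Sum>i\<in>Vx n x. real (w i) * y i) | y :: nat \<Rightarrow> real.
      (\<forall>i\<in>Vx n x. 0 \<le> y i \<and> y i \<le> 1) \<and>
      (\<forall>e\<in>Ex E x. \<forall>i j. e = {i, j} \<longrightarrow> y i + y j \<ge> 1)}"
  by (rule CollectI, rule exI[of _ "\<lambda>_. 1"]) auto

lemma LP_set_nonneg: "v \<in> {(\<Sum>i\<in>Vx n x. real (w i) * y i) | y :: nat \<Rightarrow> real.
      (\<forall>i\<in>Vx n x. 0 \<le> y i \<and> y i \<le> 1) \<and>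
      (\<forall>e\<in>Ex E x. \<forall>i j. e = {i, j} \<longrightarrow> y i + y j \<ge> 1)} \<Longrightarrow> 0 \<le> v"
  by (auto intro!: sum_nonneg)

lemma LP_nonneg: "0 \<le> LP n E w x"
  unfolding LP_def
proof (rule cInf_greatest)
  show "{(\<Sum>i\<in>Vx n x. real (w i) * y i) | y :: nat \<Rightarrow> real.
      (\<forall>i\<in>Vx n x. 0 \<le> y i \<and> y i \<le> 1) \<and>
      (\<forall>e\<in>Ex E x. \<forall>i j. e = {i, j} \<longrightarrow> y i + y j \<ge> 1)} \<noteq> {}"
    using LP_set_ne[where n=n and x=x and w=w and E=E] by (intro notI) (simp only: empty_iff)
qed (rule LP_set_nonneg)

lemma LP_le: assumes "n > 0" shows "LP n E w x \<le> real n * real (Wmax n w)"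
proof -
  have "LP n E w x \<le> (\<Sum>i\<in>Vx n x. real (w i) * 1)"
    unfolding LP_def
    by (rule cInf_lower[OF LP_set_ne], rule bdd_belowI[of _ 0], rule LP_set_nonneg)
  also have "\<dots> \<le> (\<Sum>i<n. real (w i))"
    by (simp, rule sum_mono2) (auto simp: Vx_def)
  also have "\<dots> \<le> (\<Sum>i<n. real (Wmax n w))"
  proof (intro sum_mono)
    fix i assume "i \<in> {..<n}"
    hence "w i \<le> Wmax n w" unfolding Wmax_def by (intro Max_ge) auto
    thus "real (w i) \<le> real (Wmax n w)" by auto
  qed
  finally show ?thesis by simp
qed

lemma clog_nonneg: "n > 0 \<Longrightarrow> 0 \<le> a \<Longrightarrow> 0 \<le> \<lceil>log (1 + delta n) (1 + a)\<rceil>"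
proof -
  assume "n > 0" "0 \<le> a"
  hence "0 \<le> log (1 + delta n) (1 + a)" using base_gt1[of n] by simp
  thus ?thesis by simp
qed

lemma clog_mono: "n > 0 \<Longrightarrow> 0 \<le> a \<Longrightarrow> a \<le> b \<Longrightarrow> \<lceil>log (1 + delta n) (1 + a)\<rceil> \<le> \<lceil>log (1 + delta n) (1 + b)\<rceil>"
  using base_gt1[of n] by (intro ceiling_mono) simp

lemma clog_strict: "n > 0 \<Longrightarrow> 0 \<le> a \<Longrightarrow> 0 \<le> b \<Longrightarrow> \<lceil>log (1 + delta n) (1 + a)\<rceil> < \<lceil>log (1 + delta n) (1 + b)\<rceil> \<Longrightarrow> a < b"
  using clog_mono[of n b a] by force

lemma clog_le_B: "n > 0 \<Longrightarrow> 0 \<le> a \<Longrightarrow> a \<le> real n * real (Wmax n w) \<Longrightarrow>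
   \<lceil>log (1 + delta n) (1 + a)\<rceil> \<le> \<lceil>log (1 + delta n) (1 + real n * real (Wmax n w))\<rceil>"
  by (rule clog_mono) auto

lemma Cost_flip: assumes "v < n" "x v" shows "Cost n w (x(v:=False)) = Cost n w x - real (w v)"
proof -
  have "Cost n w x = (if x v then real (w v) else 0) + (\<Sum>i\<in>{..<n}-{v}. if x i then real (w i) else 0)"
    unfolding Cost_def using assms by (subst sum.remove[of _ v]) auto
  moreover have "Cost n w (x(v:=False)) = (if (x(v:=False)) v then real (w v) else 0) + (\<Sum>i\<in>{..<n}-{v}. if (x(v:=False)) i then real (w i) else 0)"
    unfolding Cost_def using assms by (subst sum.remove[of _ v]) auto
  moreover have "(\<Sum>i\<in>{..<n}-{v}. if (x(v:=False)) i then real (w i) else 0) = (\<Sum>i\<in>{..<n}-{v}. if x i then real (w i) else 0)"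
    by (intro sum.cong) auto
  ultimately show ?thesis using assms by simp
qed

lemma Cost_le_max: assumes "\<And>i. i < n \<Longrightarrow> x i \<Longrightarrow> w i \<le> m" shows "Cost n w x \<le> real n * real m"
proof -
  have "Cost n w x \<le> (\<Sum>i<n. real m)"
    unfolding Cost_def using assms by (intro sum_mono) auto
  thus ?thesis by simp
qed

lemma b1_drop:
  assumes "v < n" "x v" "0 < w v" "\<And>i. i < n \<Longrightarrow> x i \<Longrightarrow> w i \<le> w v"
  shows "b1 n w (x(v:=False)) < b1 n w x"
proof -
  have n0: "n > 0" using assms by simp
  define C where "C = Cost n w x"
  define b where "b = 1 + delta n"
  have b1: "1 < b" using base_gt1[OF n0] by (simp add: b_def)
  have Cle: "C \<le> real n * real (w v)" unfolding C_def by (rule Cost_le_max) (use assms in auto)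
  have C': "Cost n w (x(v:=False)) = C - real (w v)" using Cost_flip[of v n x w, OF assms(1,2)] by (simp add: C_def)
  have C'nn: "0 \<le> C - real (w v)" using C' Cost_nonneg by metis
  have wv1: "1 \<le> real (w v)" using assms(3) by simp
  have key: "(1 + (C - real (w v))) * b \<le> 1 + C"
  proof -
    have "0 \<le> real n * real (w v)" by simp
    hence "1 + (C - real (w v)) \<le> 2 * (real n * real (w v))"
      using Cle wv1 by linarith
    hence "1 + (C - real (w v)) \<le> 2 * real n * real (w v)" by simp
    hence "(1 + (C - real (w v))) / (2 * real n) \<le> real (w v)"
      using n0 by (simp add: divide_le_eq mult.commute mult.left_commute)
    thus ?thesis by (simp add: b_def delta_def algebra_simps)
  qed
  have "log b (1 + (C - real (w v))) + 1 = log b ((1 + (C - real (w v))) * b)"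
    using b1 C'nn by (simp add: log_mult)
  also have "\<dots> \<le> log b (1 + C)"
    using b1 C'nn key by (subst log_le_cancel_iff) auto
  finally have "log b (1 + (C - real (w v))) \<le> log b (1 + C) - 1" by simp
  hence "\<lceil>log b (1 + (C - real (w v)))\<rceil> \<le> \<lceil>log b (1 + C) - 1\<rceil>" by (rule ceiling_mono)
  thus ?thesis unfolding b1_def C' by (simp add: b_def C_def)
qed

definition phi :: "nat \<Rightarrow> (nat \<Rightarrow> nat) \<Rightarrow> (nat \<Rightarrow> bool) set \<Rightarrow> int" where
  "phi n w P = Min (b1 n w ` P)"

definition Inv :: "nat \<Rightarrow> nat set set \<Rightarrow> (nat \<Rightarrow> nat) \<Rightarrow> (nat \<Rightarrow> bool) set \<Rightarrow> bool" where
  "Inv n E w P \<longleftrightarrow> finite P \<and> P \<noteq> {} \<and> (\<forall>x\<in>P. \<forall>i. n \<le> i \<longrightarrow> \<not> x i) \<and> inj_on (box n E w) P \<and>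
     (\<forall>y\<in>P. \<forall>z\<in>P. \<not> (weakly_le (fit n E w y) (fit n E w z) \<and> fit n E w y \<noteq> fit n E w z))"

lemma Inv_update:
  assumes "Inv n E w P" "\<forall>i. n \<le> i \<longrightarrow> \<not> x' i"
  shows "Inv n E w (demo_update n E w P x')"
proof (cases "\<exists>y\<in>P. (weakly_le (fit n E w y) (fit n E w x') \<and> fit n E w y \<noteq> fit n E w x') \<or>
              (box n E w y = box n E w x' \<and>
               Cost n w y + 2 * LP n E w y \<le> Cost n w x' + 2 * LP n E w x')")
  case True
  thus ?thesis using assms by (simp add: demo_update_def)
next
  case False
  define Q where "Q = {z \<in> P. \<not> (weakly_le (fit n E w x') (fit n E w z) \<or> box n E w z = box n E w x')}"
  have eq: "demo_update n E w P x' = insert x' Q" unfolding demo_update_def Q_def using False by (rule if_not_P)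
  have QP: "Q \<subseteq> P" by (auto simp: Q_def)
  have xQ: "x' \<notin> Q" by (auto simp: Q_def weakly_le_def)
  have inj: "inj_on (box n E w) (insert x' Q)"
    using assms(1) QP xQ by (auto simp: Inv_def Q_def intro: inj_on_subset)
  show ?thesis unfolding eq Inv_def
  proof (intro conjI)
    show "finite (insert x' Q)" using assms(1) QP by (auto simp: Inv_def intro: finite_subset)
    show "inj_on (box n E w) (insert x' Q)" by (rule inj)
    show "\<forall>x\<in>insert x' Q. \<forall>i. n \<le> i \<longrightarrow> \<not> x i" using assms QP by (auto simp: Inv_def)
    show "\<forall>y\<in>insert x' Q. \<forall>z\<in>insert x' Q. \<not> (weakly_le (fit n E w y) (fit n E w z) \<and> fit n E w y \<noteq> fit n E w z)"
      using assms(1) QP False by (auto simp: Inv_def Q_def)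
  qed simp
qed

lemma b1_le_of_weakly: "n > 0 \<Longrightarrow> weakly_le (fit n E w x) (fit n E w z) \<Longrightarrow> b1 n w x \<le> b1 n w z"
  unfolding b1_def by (rule clog_mono) (auto simp: weakly_le_def fit_def Cost_nonneg)

lemma phi_update:
  assumes "Inv n E w P" "n > 0"
  shows "phi n w (demo_update n E w P x') \<le> phi n w P"
proof (cases "\<exists>y\<in>P. (weakly_le (fit n E w y) (fit n E w x') \<and> fit n E w y \<noteq> fit n E w x') \<or>
              (box n E w y = box n E w x' \<and>
               Cost n w y + 2 * LP n E w y \<le> Cost n w x' + 2 * LP n E w x')")
  case True
  thus ?thesis using assms by (simp add: demo_update_def)
next
  case False
  define Q where "Q = {z \<in> P. \<not> (weakly_le (fit n E w x') (fit n E w z) \<or> box n E w z = box n E w x')}"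
  have eq: "demo_update n E w P x' = insert x' Q" unfolding demo_update_def Q_def using False by (rule if_not_P)
  have fin: "finite P" "P \<noteq> {}" using assms by (auto simp: Inv_def)
  have "Min (b1 n w ` P) \<in> b1 n w ` P" using fin by (intro Min_in) auto
  then obtain z where z: "z \<in> P" "b1 n w z = phi n w P"
    unfolding phi_def by auto
  have finQ: "finite (insert x' Q)" using fin by (auto simp: Q_def)
  show ?thesis
  proof (cases "z \<in> Q")
    case True
    hence "phi n w (insert x' Q) \<le> b1 n w z" unfolding phi_def using finQ by (intro Min_le) auto
    thus ?thesis using eq z by simp
  next
    case False
    hence "weakly_le (fit n E w x') (fit n E w z) \<or> box n E w z = box n E w x'" using z by (auto simp: Q_def)
    hence "b1 n w x' \<le> b1 n w z"
    proof
      assume "weakly_le (fit n E w x') (fit n E w z)"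
      thus ?thesis by (rule b1_le_of_weakly[OF assms(2)])
    next
      assume "box n E w z = box n E w x'"
      hence "fst (box n E w z) = fst (box n E w x')" by simp
      thus ?thesis by (simp add: fst_box)
    qed
    moreover have "phi n w (insert x' Q) \<le> b1 n w x'" unfolding phi_def using finQ by (intro Min_le) auto
    ultimately show ?thesis using eq z by simp
  qed
qed

lemma phi_progress:
  assumes inv: "Inv n E w P" and n0: "n > 0" and wpos: "\<forall>i<n. 0 < w i" and nz: "zero_pt \<notin> P"
  shows "\<exists>x\<in>P. \<exists>v<n. x v \<and> phi n w (demo_update n E w P (x(v:=False))) + 1 \<le> phi n w P"
proof -
  have fin: "finite P" "P \<noteq> {}" using inv by (auto simp: Inv_def)
  have "Min (Cost n w ` P) \<in> Cost n w ` P" using fin by (intro Min_in) auto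
  then obtain x where xP: "x \<in> P" and xM: "Cost n w x = Min (Cost n w ` P)" by auto
  have xmin: "\<And>y. y \<in> P \<Longrightarrow> Cost n w x \<le> Cost n w y"
    unfolding xM using fin by (intro Min_le) auto
  have xout: "\<forall>i. n \<le> i \<longrightarrow> \<not> x i" using inv xP by (auto simp: Inv_def)
  have "x \<noteq> zero_pt" using nz xP by auto
  then obtain i where "x i" unfolding zero_pt_def by auto
  hence "i < n" using xout by (meson not_less)
  define S where "S = {i. i < n \<and> x i}"
  have Sfin: "finite S" "S \<noteq> {}" using \<open>x i\<close> \<open>i < n\<close> by (auto simp: S_def)
  have "Max (w ` S) \<in> w ` S" using Sfin by (intro Max_in) auto
  then obtain v where vS: "v \<in> S" and vmax: "w v = Max (w ` S)" by auto
  have vn: "v < n" and xv: "x v" using vS by (auto simp: S_def)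
  have wmax: "\<And>j. j < n \<Longrightarrow> x j \<Longrightarrow> w j \<le> w v"
    using vmax Sfin by (auto simp: S_def)
  define x'' where "x'' = x(v:=False)"
  have drop: "b1 n w x'' < b1 n w x" unfolding x''_def
    by (rule b1_drop) (use vn xv wpos wmax in auto)
  have Cdrop: "Cost n w x'' < Cost n w x"
    using Cost_flip[of v n x w, OF vn xv] wpos vn by (simp add: x''_def)
  have bx: "\<And>y. y \<in> P \<Longrightarrow> b1 n w x \<le> b1 n w y"
    unfolding b1_def using xmin n0 Cost_nonneg by (intro clog_mono) auto
  have phiP: "b1 n w x \<le> phi n w P"
  proof -
    have "Min (b1 n w ` P) \<in> b1 n w ` P" using fin by (intro Min_in) auto
    then obtain z where "z \<in> P" "b1 n w z = phi n w P"
      unfolding phi_def by auto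
    thus ?thesis using bx by metis
  qed
  have notrej: "\<not> (\<exists>y\<in>P. (weakly_le (fit n E w y) (fit n E w x'') \<and> fit n E w y \<noteq> fit n E w x'') \<or>
              (box n E w y = box n E w x'' \<and>
               Cost n w y + 2 * LP n E w y \<le> Cost n w x'' + 2 * LP n E w x''))"
  proof
    assume "\<exists>y\<in>P. (weakly_le (fit n E w y) (fit n E w x'') \<and> fit n E w y \<noteq> fit n E w x'') \<or>
              (box n E w y = box n E w x'' \<and>
               Cost n w y + 2 * LP n E w y \<le> Cost n w x'' + 2 * LP n E w x'')"
    then obtain y where yP: "y \<in> P" and
      h: "weakly_le (fit n E w y) (fit n E w x'') \<or> box n E w y = box n E w x''" by blast
    show False using h
    proof
      assume "weakly_le (fit n E w y) (fit n E w x'')"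
      hence "Cost n w y \<le> Cost n w x''" by (simp add: weakly_le_def fit_def)
      thus False using xmin[OF yP] Cdrop by simp
    next
      assume "box n E w y = box n E w x''"
      hence "b1 n w y = b1 n w x''" by (metis fst_box)
      thus False using bx[OF yP] drop by simp
    qed
  qed
  define Q where "Q = {z \<in> P. \<not> (weakly_le (fit n E w x'') (fit n E w z) \<or> box n E w z = box n E w x'')}"
  have eq: "demo_update n E w P x'' = insert x'' Q" unfolding demo_update_def Q_def using notrej by (rule if_not_P)
  have finQ: "finite (insert x'' Q)" using fin by (auto simp: Q_def)
  have "phi n w (insert x'' Q) \<le> b1 n w x''" unfolding phi_def using finQ by (intro Min_le) auto
  hence "phi n w (demo_update n E w P x'') + 1 \<le> phi n w P" using eq drop phiP by simp
  thus ?thesis using xP vn xv unfolding x''_def by blast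
qed

definition b2 :: "nat \<Rightarrow> nat set set \<Rightarrow> (nat \<Rightarrow> nat) \<Rightarrow> (nat \<Rightarrow> bool) \<Rightarrow> int" where
  "b2 n E w x = \<lceil>log (1 + delta n) (1 + LP n E w x)\<rceil>"

definition Bi :: "nat \<Rightarrow> (nat \<Rightarrow> nat) \<Rightarrow> int" where
  "Bi n w = \<lceil>log (1 + delta n) (1 + real n * real (Wmax n w))\<rceil>"

lemma box_eq: "box n E w x = (b1 n w x, b2 n E w x)"
  by (simp add: box_def b1_def b2_def)

lemma b1_range: "n > 0 \<Longrightarrow> 0 \<le> b1 n w x \<and> b1 n w x \<le> Bi n w"
  unfolding b1_def Bi_def
  using clog_nonneg[of n "Cost n w x"] clog_le_B[of n "Cost n w x" w] Cost_nonneg[of n w x] Cost_le[of n w x] by simp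

lemma b2_range: "n > 0 \<Longrightarrow> 0 \<le> b2 n E w x \<and> b2 n E w x \<le> Bi n w"
  unfolding b2_def Bi_def
  using clog_nonneg[of n "LP n E w x"] clog_le_B[of n "LP n E w x" w] LP_nonneg[of n E w x] LP_le[of n E w x] by simp

lemma pop_inj_aux:
  assumes inv: "Inv n E w P" and n0: "n > 0" and yz: "y \<in> P" "z \<in> P"
    and lt: "b1 n w y < b1 n w z" and eq: "b1 n w y - b2 n E w y = b1 n w z - b2 n E w z"
  shows False
proof -
  have "b2 n E w y < b2 n E w z" using lt eq by simp
  hence "LP n E w y < LP n E w z" unfolding b2_def by (rule clog_strict[OF n0 LP_nonneg LP_nonneg])
  moreover have "Cost n w y < Cost n w z" using lt unfolding b1_def by (rule clog_strict[OF n0 Cost_nonneg Cost_nonneg])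
  ultimately have "weakly_le (fit n E w y) (fit n E w z) \<and> fit n E w y \<noteq> fit n E w z"
    by (auto simp: weakly_le_def fit_def)
  thus False using inv yz by (auto simp: Inv_def)
qed

lemma pop_card:
  assumes inv: "Inv n E w P" and n0: "n > 0"
  shows "real (card P) \<le> 2 * real_of_int (Bi n w) + 1"
proof -
  define d where "d x = b1 n w x - b2 n E w x" for x
  have inj: "inj_on d P"
  proof (rule inj_onI)
    fix y z assume yz: "y \<in> P" "z \<in> P" "d y = d z"
    show "y = z"
    proof (cases "b1 n w y = b1 n w z")
      case True
      hence "box n E w y = box n E w z" using yz(3) by (simp add: box_eq d_def)
      thus ?thesis using inv yz by (auto simp: Inv_def inj_on_def)
    next
      case False
      hence "b1 n w y < b1 n w z \<or> b1 n w z < b1 n w y" by linarith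
      thus ?thesis using pop_inj_aux[OF inv n0, of y z] pop_inj_aux[OF inv n0, of z y] yz
        by (auto simp: d_def)
    qed
  qed
  have sub: "d ` P \<subseteq> {- Bi n w .. Bi n w}"
  proof
    fix t assume "t \<in> d ` P"
    then obtain x where "t = d x" by auto
    thus "t \<in> {- Bi n w .. Bi n w}"
      using b1_range[OF n0, of w x] b2_range[OF n0, of E w x] by (auto simp: d_def)
  qed
  have "card P = card (d ` P)" using inj by (simp add: card_image)
  also have "\<dots> \<le> card {- Bi n w .. Bi n w}" by (rule card_mono[OF _ sub]) simp
  finally have "card P \<le> nat (2 * Bi n w + 1)" by simp
  moreover have "0 \<le> Bi n w" using b1_range[OF n0, of w zero_pt] by simp
  ultimately show ?thesis by linarith
qed

lemma set_mutate: "x' \<in> set_pmf (mutate n x) \<Longrightarrow> n \<le> i \<Longrightarrow> x' i = x i"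
proof -
  assume "x' \<in> set_pmf (mutate n x)" "n \<le> i"
  then obtain f where f: "f \<in> set_pmf (Pi_pmf {0..<n} False (\<lambda>_. bernoulli_pmf (1 / real n)))"
    and x': "x' = (\<lambda>i. x i \<noteq> f i)" by (auto simp: mutate_def)
  have "f i = False" using set_Pi_pmf_subset[of "{0..<n}" False "\<lambda>_. bernoulli_pmf (1 / real n)"] f \<open>n \<le> i\<close> by auto
  thus ?thesis using x' by simp
qed

lemma set_init: "x \<in> set_pmf (init_pt n) \<Longrightarrow> n \<le> i \<Longrightarrow> \<not> x i"
  using set_Pi_pmf_subset[of "{0..<n}" False "\<lambda>_. bernoulli_pmf (1 / 2)"] by (auto simp: init_pt_def)

lemma Inv_single: "\<forall>i. n \<le> i \<longrightarrow> \<not> x i \<Longrightarrow> Inv n E w {x}"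
  by (auto simp: Inv_def)

lemma Inv_step:
  assumes "Inv n E w P" "P' \<in> set_pmf (demo_step_stopped n E w P)"
  shows "Inv n E w P'"
proof (cases "zero_pt \<in> P")
  case True thus ?thesis using assms by (simp add: demo_step_stopped_def)
next
  case False
  have fin: "finite P" "P \<noteq> {}" using assms by (auto simp: Inv_def)
  from assms(2) False obtain x x' where "x \<in> P" "x' \<in> set_pmf (mutate n x)" "P' = demo_update n E w P x'"
    using fin by (auto simp: demo_step_stopped_def demo_step_def)
  moreover have "\<forall>i. n \<le> i \<longrightarrow> \<not> x' i"
    using calculation assms(1) set_mutate by (fastforce simp: Inv_def)
  ultimately show ?thesis using Inv_update assms(1) by blast
qed

lemma Inv_pop: "P \<in> set_pmf (demo_pop n E w t) \<Longrightarrow> Inv n E w P"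
proof (induction t arbitrary: P)
  case 0
  then obtain x where "x \<in> set_pmf (init_pt n)" "P = {x}" by auto
  thus ?case by (auto intro!: Inv_single dest: set_init)
next
  case (Suc t)
  from Suc.prems obtain Q where "Q \<in> set_pmf (demo_pop n E w t)" "P \<in> set_pmf (demo_step_stopped n E w Q)" by auto
  thus ?case using Inv_step Suc.IH by blast
qed

lemma exp_bound: assumes "n \<ge> (2::nat)" shows "1/3 \<le> (1 - 1 / real n) ^ (n - 1)"
proof -
  define m where "m = n - 1"
  have m1: "m \<ge> 1" and nm: "real n = real m + 1" using assms by (auto simp: m_def)
  have "(1 + 1 / real m) ^ m \<le> exp (1 / real m) ^ m"
    by (intro power_mono) (auto simp: exp_ge_add_one_self add_increasing2)
  also have "\<dots> = exp (real m * (1 / real m))" by (rule exp_of_nat_mult[symmetric])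
  also have "\<dots> = exp 1" using m1 by simp
  also have "\<dots> \<le> 3" by (rule exp_le)
  finally have h: "(1 + 1 / real m) ^ m \<le> 3" .
  have prod1: "(1 - 1 / real n) * (1 + 1 / real m) = 1"
  proof -
    have mp: "real m > 0" using m1 by simp
    have "(1 - 1 / (real m + 1)) * (1 + 1 / real m) = (real m / (real m + 1)) * ((real m + 1) / real m)"
      using mp by (simp add: field_simps)
    also have "\<dots> = 1" using mp by simp
    finally show ?thesis unfolding nm .
  qed
  have "(1 - 1 / real n) ^ m * (1 + 1 / real m) ^ m = 1"
    by (simp add: power_mult_distrib[symmetric] prod1)
  moreover have "0 \<le> (1 - 1 / real n) ^ m" using assms by simp
  ultimately have "1 \<le> (1 - 1 / real n) ^ m * 3"
    using h by (metis mult_left_mono)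
  thus ?thesis unfolding m_def by simp
qed

lemma mutate_prob:
  assumes n2: "n \<ge> 2" and vn: "v < n" and xv: "x v"
  shows "1 / (3 * real n) \<le> pmf (mutate n x) (x(v:=False))"
proof -
  define M where "M = Pi_pmf {0..<n} False (\<lambda>_. bernoulli_pmf (1 / real n))"
  define f0 where "f0 = (\<lambda>i. i = v)"
  have g: "(\<lambda>i. x i \<noteq> f0 i) = x(v:=False)" using xv by (auto simp: f0_def)
  have "pmf M f0 = (\<Prod>i\<in>{0..<n}. pmf (bernoulli_pmf (1 / real n)) (f0 i))"
    unfolding M_def by (subst pmf_Pi) (auto simp: f0_def vn)
  also have "\<dots> = pmf (bernoulli_pmf (1 / real n)) (f0 v) * (\<Prod>i\<in>{0..<n}-{v}. pmf (bernoulli_pmf (1 / real n)) (f0 i))"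
    using vn by (subst prod.remove[of _ v]) auto
  also have "(\<Prod>i\<in>{0..<n}-{v}. pmf (bernoulli_pmf (1 / real n)) (f0 i)) = (\<Prod>i\<in>{0..<n}-{v}. 1 - 1 / real n)"
    using n2 by (intro prod.cong) (auto simp: f0_def)
  also have "\<dots> = (1 - 1 / real n) ^ (n - 1)" using vn by (simp add: prod_constant)
  also have "pmf (bernoulli_pmf (1 / real n)) (f0 v) = 1 / real n" using n2 by (simp add: f0_def)
  finally have pf0: "pmf M f0 = 1 / real n * (1 - 1 / real n) ^ (n - 1)" .
  have "1 / (3 * real n) = 1 / real n * (1/3)" by simp
  also have "\<dots> \<le> 1 / real n * (1 - 1 / real n) ^ (n - 1)"
    by (rule mult_left_mono[OF exp_bound[OF n2]]) simp
  also have "\<dots> = measure M {f0}" by (simp add: pf0 measure_pmf_single)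
  also have "\<dots> \<le> measure M ((\<lambda>f i. x i \<noteq> f i) -` {x(v:=False)})"
    using g by (intro measure_pmf.finite_measure_mono) auto
  also have "\<dots> = pmf (mutate n x) (x(v:=False))"
    by (simp add: mutate_def M_def pmf_map)
  finally show ?thesis .
qed

definition cc :: "nat \<Rightarrow> (nat \<Rightarrow> nat) \<Rightarrow> real" where
  "cc n w = 3 * real n * (2 * real_of_int (Bi n w) + 1)"

definition V :: "nat \<Rightarrow> (nat \<Rightarrow> nat) \<Rightarrow> (nat \<Rightarrow> bool) set \<Rightarrow> ennreal" where
  "V n w P = ennreal (cc n w * real_of_int (phi n w P))"

lemma Bi_nonneg: "n > 0 \<Longrightarrow> 0 \<le> Bi n w"
  using b1_range[of n w zero_pt] by simp

lemma cc_nonneg: "n > 0 \<Longrightarrow> 0 \<le> cc n w"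
  using Bi_nonneg[of n w] by (simp add: cc_def)

lemma phi_nonneg: "n > 0 \<Longrightarrow> finite P \<Longrightarrow> P \<noteq> {} \<Longrightarrow> 0 \<le> phi n w P"
  unfolding phi_def using b1_range by (subst Min_ge_iff) auto

lemma phi_le_Bi: "n > 0 \<Longrightarrow> finite P \<Longrightarrow> P \<noteq> {} \<Longrightarrow> phi n w P \<le> Bi n w"
  unfolding phi_def using b1_range by (subst Min_le_iff) auto

lemma upd_fin: "finite P \<Longrightarrow> P \<noteq> {} \<Longrightarrow> finite (demo_update n E w P x') \<and> demo_update n E w P x' \<noteq> {}"
  unfolding demo_update_def by auto

lemma g_le:
  assumes "Inv n E w P" "n > 0"
  shows "(\<integral>\<^sup>+x'. V n w (demo_update n E w P x') \<partial>measure_pmf M) \<le> V n w P"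
proof -
  have "(\<integral>\<^sup>+x'. V n w (demo_update n E w P x') \<partial>measure_pmf M) \<le> (\<integral>\<^sup>+x'. V n w P \<partial>measure_pmf M)"
  proof (intro nn_integral_mono)
    fix x' show "V n w (demo_update n E w P x') \<le> V n w P"
      unfolding V_def using phi_update[OF assms, of x'] cc_nonneg[OF assms(2), of w]
      by (intro ennreal_leI mult_left_mono) auto
  qed
  also have "\<dots> = V n w P" by (simp add: measure_pmf.emeasure_space_1)
  finally show ?thesis .
qed

lemma g_prog:
  assumes inv: "Inv n E w P" and n0: "n > 0"
    and prog: "phi n w (demo_update n E w P x'') + 1 \<le> phi n w P"
  shows "(\<integral>\<^sup>+x'. V n w (demo_update n E w P x') \<partial>measure_pmf M) + ennreal (cc n w * pmf M x'') \<le> V n w P"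
proof -
  have fin: "finite P" "P \<noteq> {}" using inv by (auto simp: Inv_def)
  have c0: "0 \<le> cc n w" by (rule cc_nonneg[OF n0])
  have pw: "V n w (demo_update n E w P x') + ennreal (cc n w) * indicator {x''} x' \<le> V n w P" for x'
  proof (cases "x' = x''")
    case True
    have p0: "0 \<le> phi n w (demo_update n E w P x'')"
      using upd_fin[OF fin, of n E w x''] by (intro phi_nonneg[OF n0]) auto
    have m0: "0 \<le> cc n w * real_of_int (phi n w (demo_update n E w P x''))"
      using p0 c0 by simp
    have "V n w (demo_update n E w P x') + ennreal (cc n w) * indicator {x''} x'
        = ennreal (cc n w * real_of_int (phi n w (demo_update n E w P x''))) + ennreal (cc n w)"
      unfolding True V_def by simp
    also have "\<dots> = ennreal (cc n w * real_of_int (phi n w (demo_update n E w P x'')) + cc n w)"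
      by (rule ennreal_plus[OF m0 c0, symmetric])
    also have "\<dots> = ennreal (cc n w * (real_of_int (phi n w (demo_update n E w P x'')) + 1))"
      by (simp add: algebra_simps)
    also have "\<dots> \<le> V n w P" unfolding V_def
      using prog c0 by (intro ennreal_leI mult_left_mono) auto
    finally show ?thesis .
  next
    case False
    have "V n w (demo_update n E w P x') \<le> V n w P"
      unfolding V_def using phi_update[OF inv n0, of x'] c0
      by (intro ennreal_leI mult_left_mono) auto
    thus ?thesis using False by simp
  qed
  have "(\<integral>\<^sup>+x'. V n w (demo_update n E w P x') \<partial>measure_pmf M) + ennreal (cc n w * pmf M x'')
      = (\<integral>\<^sup>+x'. V n w (demo_update n E w P x') \<partial>measure_pmf M) + ennreal (cc n w) * (\<integral>\<^sup>+x'. indicator {x''} x' \<partial>measure_pmf M)"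
  proof -
    have "(\<integral>\<^sup>+x'. indicator {x''} x' \<partial>measure_pmf M) = emeasure (measure_pmf M) {x''}"
      by (rule nn_integral_indicator) simp
    also have "\<dots> = ennreal (pmf M x'')" by (rule emeasure_pmf_single)
    finally have "ennreal (cc n w) * (\<integral>\<^sup>+x'. indicator {x''} x' \<partial>measure_pmf M) = ennreal (cc n w * pmf M x'')"
      using c0 by (simp add: ennreal_mult)
    thus ?thesis by simp
  qed
  also have "\<dots> = (\<integral>\<^sup>+x'. V n w (demo_update n E w P x') + ennreal (cc n w) * indicator {x''} x' \<partial>measure_pmf M)"
  proof -
    have "(\<integral>\<^sup>+x'. V n w (demo_update n E w P x') + ennreal (cc n w) * indicator {x''} x' \<partial>measure_pmf M)
       = (\<integral>\<^sup>+x'. V n w (demo_update n E w P x') \<partial>measure_pmf M) + (\<integral>\<^sup>+x'. ennreal (cc n w) * indicator {x''} x' \<partial>measure_pmf M)"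
      by (rule nn_integral_add) simp_all
    also have "(\<integral>\<^sup>+x'. ennreal (cc n w) * indicator {x''} x' \<partial>measure_pmf M) = ennreal (cc n w) * (\<integral>\<^sup>+x'. indicator {x''} x' \<partial>measure_pmf M)"
      by (rule nn_integral_cmult) simp
    finally show ?thesis by simp
  qed
  also have "\<dots> \<le> (\<integral>\<^sup>+x'. V n w P \<partial>measure_pmf M)"
    by (intro nn_integral_mono pw)
  also have "\<dots> = V n w P" by (simp add: measure_pmf.emeasure_space_1)
  finally show ?thesis .
qed

lemma drift:
  assumes inv: "Inv n E w P" and n2: "n \<ge> 2" and wpos: "\<forall>i<n. 0 < w i"
  shows "(\<integral>\<^sup>+P'. V n w P' \<partial>measure_pmf (demo_step_stopped n E w P)) + indicator {P. zero_pt \<notin> P} P \<le> V n w P"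
proof (cases "zero_pt \<in> P")
  case True
  thus ?thesis by (simp add: demo_step_stopped_def)
next
  case False
  have n0: "n > 0" using n2 by simp
  have fin: "finite P" "P \<noteq> {}" using inv by (auto simp: Inv_def)
  define g where "g x = (\<integral>\<^sup>+x'. V n w (demo_update n E w P x') \<partial>measure_pmf (mutate n x))" for x
  define k where "k = card P"
  have k0: "k > 0" using fin by (simp add: k_def card_gt_0_iff)
  obtain x v where xP: "x \<in> P" and vn: "v < n" and xv: "x v"
    and prog: "phi n w (demo_update n E w P (x(v:=False))) + 1 \<le> phi n w P"
    using phi_progress[OF inv n0 wpos False] by blast
  have gx: "g x + ennreal (cc n w * pmf (mutate n x) (x(v:=False))) \<le> V n w P"
    unfolding g_def by (rule g_prog[OF inv n0 prog])
  have c0: "0 \<le> cc n w" by (rule cc_nonneg[OF n0])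
  have "real k \<le> 2 * real_of_int (Bi n w) + 1" unfolding k_def by (rule pop_card[OF inv n0])
  also have "\<dots> = cc n w * (1 / (3 * real n))" using n0 by (simp add: cc_def)
  also have "\<dots> \<le> cc n w * pmf (mutate n x) (x(v:=False))"
    by (rule mult_left_mono[OF mutate_prob[of n v x, OF n2 vn xv] c0])
  finally have kle: "of_nat k \<le> ennreal (cc n w * pmf (mutate n x) (x(v:=False)))"
    by (simp add: ennreal_of_nat_eq_real_of_nat ennreal_leI)
  have rest: "sum g (P - {x}) \<le> of_nat (card (P - {x})) * V n w P"
    by (rule sum_bounded_above) (use g_le[OF inv n0] in \<open>auto simp: g_def\<close>)
  have cardm: "card (P - {x}) = k - 1" using xP fin by (simp add: k_def)
  have "sum g P + of_nat k = g x + sum g (P - {x}) + of_nat k"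
    using xP fin by (simp add: sum.remove)
  also have "\<dots> \<le> g x + ennreal (cc n w * pmf (mutate n x) (x(v:=False))) + sum g (P - {x})"
    using kle by (simp add: add_mono add.assoc add.commute add.left_commute)
  also have "\<dots> \<le> V n w P + of_nat (k - 1) * V n w P"
    using gx rest cardm by (intro add_mono) auto
  also have "\<dots> = of_nat k * V n w P"
    using k0 by (cases k) (auto simp: algebra_simps)
  finally have main: "sum g P + of_nat k \<le> of_nat k * V n w P" .
  have knz: "(of_nat k :: ennreal) \<noteq> 0" "(of_nat k :: ennreal) \<noteq> top" using k0 by auto
  have "(\<integral>\<^sup>+P'. V n w P' \<partial>measure_pmf (demo_step_stopped n E w P)) = sum g P / of_nat k"
    using False fin by (simp add: demo_step_stopped_def demo_step_def g_def nn_integral_pmf_of_set k_def)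
  also have "\<dots> + 1 = (sum g P + of_nat k) / of_nat k"
  proof -
    have "(of_nat k :: ennreal) / of_nat k = 1"
      by (rule ennreal_divide_self) (use knz in \<open>auto simp: less_top[symmetric]\<close>)
    thus ?thesis by (simp add: add_divide_distrib_ennreal)
  qed
  also have "\<dots> \<le> (of_nat k * V n w P) / of_nat k"
    by (rule divide_right_mono_ennreal[OF main])
  also have "\<dots> = V n w P" using knz by (simp add: mult.commute[of "of_nat k"] ennreal_mult_divide_eq)
  finally show ?thesis using False by simp
qed

lemma partial_bound:
  assumes n2: "n \<ge> 2" and wpos: "\<forall>i<n. 0 < w i"
  shows "(\<Sum>s<t. ennreal (measure_pmf.prob (demo_pop n E w s) {P. zero_pt \<notin> P}))
          + (\<integral>\<^sup>+P. V n w P \<partial>measure_pmf (demo_pop n E w t))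
         \<le> (\<integral>\<^sup>+P. V n w P \<partial>measure_pmf (demo_pop n E w 0))"
proof (induction t)
  case 0 show ?case by simp
next
  case (Suc t)
  let ?A = "{P. zero_pt \<notin> P}"
  let ?M = "demo_pop n E w t"
  have pr: "ennreal (measure_pmf.prob ?M ?A) = (\<integral>\<^sup>+P. indicator ?A P \<partial>measure_pmf ?M)"
    by (simp add: measure_pmf.emeasure_eq_measure[symmetric])
  have "(\<integral>\<^sup>+P. V n w P \<partial>measure_pmf (demo_pop n E w (Suc t))) + ennreal (measure_pmf.prob ?M ?A)
      = (\<integral>\<^sup>+P. (\<integral>\<^sup>+P'. V n w P' \<partial>measure_pmf (demo_step_stopped n E w P)) + indicator ?A P \<partial>measure_pmf ?M)"
    unfolding pr by (simp add: nn_integral_add)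
  also have "\<dots> \<le> (\<integral>\<^sup>+P. V n w P \<partial>measure_pmf ?M)"
    by (intro nn_integral_mono_AE) (auto simp: AE_measure_pmf_iff intro!: drift[OF _ n2 wpos] Inv_pop)
  finally have step: "(\<integral>\<^sup>+P. V n w P \<partial>measure_pmf (demo_pop n E w (Suc t))) + ennreal (measure_pmf.prob ?M ?A)
      \<le> (\<integral>\<^sup>+P. V n w P \<partial>measure_pmf ?M)" .
  have "(\<Sum>s<Suc t. ennreal (measure_pmf.prob (demo_pop n E w s) ?A)) + (\<integral>\<^sup>+P. V n w P \<partial>measure_pmf (demo_pop n E w (Suc t)))
     = (\<Sum>s<t. ennreal (measure_pmf.prob (demo_pop n E w s) ?A)) +
       ((\<integral>\<^sup>+P. V n w P \<partial>measure_pmf (demo_pop n E w (Suc t))) + ennreal (measure_pmf.prob ?M ?A))"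
    by (simp add: algebra_simps)
  also have "\<dots> \<le> (\<Sum>s<t. ennreal (measure_pmf.prob (demo_pop n E w s) ?A)) + (\<integral>\<^sup>+P. V n w P \<partial>measure_pmf ?M)"
    by (intro add_left_mono step)
  also have "\<dots> \<le> (\<integral>\<^sup>+P. V n w P \<partial>measure_pmf (demo_pop n E w 0))" by (rule Suc.IH)
  finally show ?case .
qed

lemma time_bound:
  assumes n2: "n \<ge> 2" and wpos: "\<forall>i<n. 0 < w i"
  shows "demo_expected_time n E w \<le> ennreal (cc n w * real_of_int (Bi n w))"
proof -
  have n0: "n > 0" using n2 by simp
  have V0: "(\<integral>\<^sup>+P. V n w P \<partial>measure_pmf (demo_pop n E w 0)) \<le> ennreal (cc n w * real_of_int (Bi n w))"
  proof -
    have "(\<integral>\<^sup>+P. V n w P \<partial>measure_pmf (demo_pop n E w 0)) \<le> (\<integral>\<^sup>+P. ennreal (cc n w * real_of_int (Bi n w)) \<partial>measure_pmf (demo_pop n E w 0))"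
    proof (intro nn_integral_mono_AE, unfold AE_measure_pmf_iff, intro ballI)
      fix P assume "P \<in> set_pmf (demo_pop n E w 0)"
      hence "Inv n E w P" by (rule Inv_pop)
      hence "phi n w P \<le> Bi n w" using phi_le_Bi[OF n0] by (auto simp: Inv_def)
      thus "V n w P \<le> ennreal (cc n w * real_of_int (Bi n w))"
        unfolding V_def using cc_nonneg[OF n0, of w] by (intro ennreal_leI mult_left_mono) auto
    qed
    also have "\<dots> = ennreal (cc n w * real_of_int (Bi n w))" by (simp add: measure_pmf.emeasure_space_1)
    finally show ?thesis .
  qed
  show ?thesis unfolding demo_expected_time_def
  proof (rule suminf_le_const[OF summableI])
    fix t
    have "(\<Sum>s<t. ennreal (measure_pmf.prob (demo_pop n E w s) {P. zero_pt \<notin> P}))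
        \<le> (\<Sum>s<t. ennreal (measure_pmf.prob (demo_pop n E w s) {P. zero_pt \<notin> P}))
          + (\<integral>\<^sup>+P. V n w P \<partial>measure_pmf (demo_pop n E w t))" by simp
    also have "\<dots> \<le> ennreal (cc n w * real_of_int (Bi n w))"
      using partial_bound[OF n2 wpos] V0 by (rule order_trans)
    finally show "(\<Sum>s<t. ennreal (measure_pmf.prob (demo_pop n E w s) {P. zero_pt \<notin> P})) \<le> ennreal (cc n w * real_of_int (Bi n w))" .
  qed
qed

lemma ln2_ge: "1/2 \<le> ln (2::real)"
proof -
  have "exp (1/2::real) ^ 2 = exp 1" by (simp add: exp_of_nat_mult[symmetric])
  also have "\<dots> \<le> 2 ^ 2" using exp_le by simp
  finally have "exp (1/2::real) \<le> 2" by (rule power2_le_imp_le) simp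
  thus ?thesis by (subst ln_ge_iff) auto
qed

lemma Bi_bound:
  assumes n2: "n \<ge> 2" and W1: "Wmax n w \<ge> 1"
  shows "real_of_int (Bi n w) \<le> 9 * (real n * (ln (real n) + ln (real (Wmax n w))))"
proof -
  define W where "W = real (Wmax n w)"
  define L where "L = ln (real n) + ln W"
  have W1': "W \<ge> 1" using W1 by (simp add: W_def)
  have n2': "real n \<ge> 2" using n2 by simp
  have lnn: "ln 2 \<le> ln (real n)" using n2' by simp
  have lnW: "0 \<le> ln W" using W1' by simp
  have L2: "1/2 \<le> L" using ln2_ge lnn lnW by (simp add: L_def)
  define b where "b = 1 + delta n"
  define x where "x = 1 / (2 * real n)"
  have x: "0 \<le> x" "x \<le> 1/4" using n2' by (auto simp: x_def field_simps)
  have "x * x \<le> x * (1/2)" using x by (intro mult_left_mono) auto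
  hence "x / 2 \<le> x - x^2" by (simp add: power2_eq_square)
  also have "\<dots> \<le> ln (1 + x)" by (rule ln_one_plus_pos_lower_bound) (use x in auto)
  finally have lnb: "1 / (4 * real n) \<le> ln b" by (simp add: b_def delta_def x_def)
  have "0 < 1 / (4 * real n)" using n2' by simp
  hence lnbpos: "0 < ln b" using lnb by linarith
  have nW1: "1 * 1 \<le> real n * W" using n2' W1' by (intro mult_mono) auto
  have "ln (1 + real n * W) \<le> ln (2 * real n * W)"
    using nW1 by (subst ln_le_cancel_iff) (auto simp: mult.commute)
  also have "\<dots> = ln 2 + ln (real n) + ln W" using n2' W1' by (simp add: ln_mult)
  also have "\<dots> \<le> 2 * ln (real n) + 2 * ln W" using lnn lnW by linarith
  also have "\<dots> = 2 * L" by (simp add: L_def algebra_simps)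
  finally have l1: "ln (1 + real n * W) \<le> 2 * L" .
  have l0: "0 \<le> ln (1 + real n * W)" using n2' W1' by simp
  have "log b (1 + real n * W) = ln (1 + real n * W) / ln b" by (simp add: log_def)
  also have "\<dots> \<le> ln (1 + real n * W) / (1 / (4 * real n))"
    by (rule divide_left_mono[OF lnb l0]) (use n2' lnbpos in auto)
  also have "\<dots> = 4 * real n * ln (1 + real n * W)" by simp
  also have "\<dots> \<le> 4 * real n * (2 * L)" by (rule mult_left_mono[OF l1]) simp
  finally have A: "log b (1 + real n * W) \<le> 8 * (real n * L)" by simp
  have "2 * (1/2) \<le> real n * L" using n2' L2 by (intro mult_mono) auto
  hence nL: "1 \<le> real n * L" by simp
  have "real_of_int (Bi n w) \<le> log b (1 + real n * W) + 1"
    unfolding Bi_def b_def W_def by linarith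
  also have "\<dots> \<le> 9 * (real n * L)" using A nL by linarith
  finally show ?thesis by (simp add: L_def W_def)
qed

lemma final_arith:
  assumes n2: "n \<ge> 2" and W1: "Wmax n w \<ge> 1"
  shows "cc n w * real_of_int (Bi n w) \<le> 513 * real n ^ 3 * (ln (real n) + ln (real (Wmax n w))) ^ 2"
proof -
  define X where "X = real n * (ln (real n) + ln (real (Wmax n w)))"
  have B: "real_of_int (Bi n w) \<le> 9 * X" using Bi_bound[OF n2 W1] by (simp add: X_def)
  have B0: "0 \<le> real_of_int (Bi n w)" using Bi_nonneg[of n w] n2 by simp
  have X1: "1 \<le> X"
  proof -
    have "ln 2 \<le> ln (real n)" using n2 by simp
    moreover have "0 \<le> ln (real (Wmax n w))" using W1 by simp
    ultimately have "1/2 \<le> ln (real n) + ln (real (Wmax n w))"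
      using ln2_ge by linarith
    hence "2 * (1/2) \<le> X" unfolding X_def using n2 by (intro mult_mono) auto
    thus ?thesis by simp
  qed
  have n0: "0 \<le> real n" by simp
  have "2 * real_of_int (Bi n w) + 1 \<le> 19 * X" using B X1 by linarith
  hence "cc n w \<le> 3 * real n * (19 * X)" unfolding cc_def by (intro mult_left_mono) auto
  moreover have "0 \<le> cc n w" using cc_nonneg[of n w] n2 by simp
  ultimately have "cc n w * real_of_int (Bi n w) \<le> (3 * real n * (19 * X)) * (9 * X)"
    using B B0 by (intro mult_mono) auto
  also have "\<dots> = 513 * real n ^ 3 * (ln (real n) + ln (real (Wmax n w))) ^ 2"
    by (simp add: X_def power2_eq_square power3_eq_cube algebra_simps)
  finally show ?thesis .
qed

theorem lemma7:
  shows "\<exists>C N::nat. C > (0::real) \<and>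
    (\<forall>n E w. n \<ge> N \<longrightarrow> wvc_instance n E w \<longrightarrow>
       demo_expected_time n E w
         \<le> ennreal (C * real n ^ 3 * (ln (real n) + ln (real (Wmax n w))) ^ 2))"
proof (rule exI[of _ 513], rule exI[of _ 2], intro conjI allI impI)
  fix n E w assume n2: "2 \<le> n" and inst: "wvc_instance n E w"
  have wpos: "\<forall>i<n. 0 < w i" using inst by (simp add: wvc_instance_def)
  have "w 0 \<le> Wmax n w" unfolding Wmax_def using n2 by (intro Max_ge) auto
  moreover have "0 < w 0" using wpos n2 by simp
  ultimately have W1: "Wmax n w \<ge> 1" by linarith
  show "demo_expected_time n E w \<le> ennreal (513 * real n ^ 3 * (ln (real n) + ln (real (Wmax n w))) ^ 2)"
  proof (rule order_trans[OF time_bound[OF n2 wpos]])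
    show "ennreal (cc n w * real_of_int (Bi n w)) \<le> ennreal (513 * real n ^ 3 * (ln (real n) + ln (real (Wmax n w))) ^ 2)"
      by (rule ennreal_leI[OF final_arith[OF n2 W1]])
  qed
qed simp

end
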